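(* Let $g$ solve system (S3) with initial data $h_{ii}>0$, $h_{11}\le h_{22}\le h_{33}$, and suppose $h\in D_S$, i.e. the solution of the planar system (P) starting at $(b_0,c_0)=(h_{00}^{1/3}h_{22},h_{00}^{1/3}h_{33})$ converges to $P_1$. Then the solution exists for all $t\ge 0$ and as $t\to\infty$: $g_{00}\to0$; $g_{11},g_{22},g_{33}\to\infty$; $g_{22}/g_{11}\to4$ and $g_{22}/g_{33}\to1$.
   Context: Let $\det h = h_{00}h_{11}h_{22}h_{33}$, $\beta=\frac{1}{6(\det h)^2}$, $p(x,y,z) = x^4 - x^3(y+z) + x^2yz + x(-y^3+y^2z+yz^2-z^3) + y^4 - y^3z - yz^3 + z^4$, $q(x,y,z) = 5x^4 - 3x^3(y+z) + x^2yz + x(y^3-y^2z-yz^2+z^3) - 3y^4 + 3y^3z + 3yz^3 - 3z^4$, $r(x,y,z) = \tfrac12(p+3q)(x,y,z) = 8x^4-5x^3(y+z)+2x^2yz+x(y^3-y^2z-yz^2+z^3)-4y^4+4y^3z+4yz^3-4z^4$. System (S3): $\dot g_{00} = -\beta\,p(g_{11},g_{22},g_{33})\,g_{00}^3$, $\dot g_{11} = -\beta\,q(g_{11},g_{22},g_{33})\,g_{00}^2g_{11}$, $\dot g_{22} = -\beta\,q(g_{22},g_{33},g_{11})\,g_{00}^2g_{22}$, $\dot g_{33} = -\beta\,q(g_{33},g_{11},g_{22})\,g_{00}^2g_{33}$, $g_{ii}(0)=h_{ii}$ (Bach flow on $\mathbb{R}\times\mathbb{S}^3$ in a diagonalizing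 frame; $g_{00}g_{11}g_{22}g_{33}=\det h$ is preserved). Set $a=g_{00}^{1/3}g_{11}$, $b=g_{00}^{1/3}g_{22}$, $c=g_{00}^{1/3}g_{33}$, so $abc=\det h$. Under (S3), $(b,c)$ follows, up to a time reparametrization, the planar system (P): $\dot b=-\tfrac23 r(b,a,c)\,b$, $\dot c=-\tfrac23 r(c,a,b)\,c$ with $a=\det h/(bc)$, on the region $a\le b\le c$. $P_0$ is the point $b=c=(\det h)^{1/3}$ (where $a=b=c$), and $P_1$ is the point $b=c=(4\det h)^{1/3}$ (where $4a=b=c$). $D_S$ is the set of initial metrics whose (P)-trajectory converges to $P_1$ (the stable manifold of the saddle $P_1$); $D_\infty$ the set whose (P)-trajectory has $b,c\to\infty$; $D_{L_0}$ the set whose (P)-trajectory converges to $P_0$. *)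

theory Defs
  imports "HOL-Analysis.Analysis"
begin

definition bach_p :: "real \<Rightarrow> real \<Rightarrow> real \<Rightarrow> real" where
  "bach_p x y z = x^4 - x^3*(y+z) + x^2*y*z + x*(- (y^3) + y^2*z + y*z^2 - z^3)
                  + y^4 - y^3*z - y*z^3 + z^4"

definition bach_q :: "real \<Rightarrow> real \<Rightarrow> real \<Rightarrow> real" where
  "bach_q x y z = 5*x^4 - 3*x^3*(y+z) + x^2*y*z + x*(y^3 - y^2*z - y*z^2 + z^3)
                  - 3*y^4 + 3*y^3*z + 3*y*z^3 - 3*z^4"

definition bach_r :: "real \<Rightarrow> real \<Rightarrow> real \<Rightarrow> real" where
  "bach_r x y z = (bach_p x y z + 3 * bach_q x y z) / 2"

definition S3_solution ::
  "real \<Rightarrow> real \<Rightarrow> real \<Rightarrow> real \<Rightarrow>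
   (real \<Rightarrow> real) \<Rightarrow> (real \<Rightarrow> real) \<Rightarrow> (real \<Rightarrow> real) \<Rightarrow> (real \<Rightarrow> real) \<Rightarrow> bool" where
  "S3_solution h0 h1 h2 h3 g0 g1 g2 g3 \<longleftrightarrow>
     (let \<beta> = 1 / (6 * (h0*h1*h2*h3)^2) in
      g0 0 = h0 \<and> g1 0 = h1 \<and> g2 0 = h2 \<and> g3 0 = h3 \<and>
      (\<forall>t\<ge>0.
        (g0 has_real_derivative (- \<beta> * bach_p (g1 t) (g2 t) (g3 t) * (g0 t)^3)) (at t within {0..}) \<and>
        (g1 has_real_derivative (- \<beta> * bach_q (g1 t) (g2 t) (g3 t) * (g0 t)^2 * g1 t)) (at t within {0..}) \<and>
        (g2 has_real_derivative (- \<beta> * bach_q (g2 t) (g3 t) (g1 t) * (g0 t)^2 * g2 t)) (at t within {0..}) \<and>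
        (g3 has_real_derivative (- \<beta> * bach_q (g3 t) (g1 t) (g2 t) * (g0 t)^2 * g3 t)) (at t within {0..})))"

definition P_solution ::
  "real \<Rightarrow> real \<Rightarrow> real \<Rightarrow> (real \<Rightarrow> real) \<Rightarrow> (real \<Rightarrow> real) \<Rightarrow> bool" where
  "P_solution dh b0 c0 b c \<longleftrightarrow>
     b 0 = b0 \<and> c 0 = c0 \<and>
     (\<forall>t\<ge>0. b t > 0 \<and> c t > 0 \<and>
        (b has_real_derivative (- (2/3) * bach_r (b t) (dh / (b t * c t)) (c t) * b t)) (at t within {0..}) \<and>
        (c has_real_derivative (- (2/3) * bach_r (c t) (dh / (b t * c t)) (b t) * c t)) (at t within {0..}))"

definition in_D_S :: "real \<Rightarrow> real \<Rightarrow> real \<Rightarrow> real \<Rightarrow> bool" where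
  "in_D_S h0 h1 h2 h3 \<longleftrightarrow>
     (let dh = h0*h1*h2*h3 in
      \<exists>b c. P_solution dh (h0 powr (1/3) * h2) (h0 powr (1/3) * h3) b c \<and>
            (b \<longlongrightarrow> (4*dh) powr (1/3)) at_top \<and> (c \<longlongrightarrow> (4*dh) powr (1/3)) at_top)"

end

theory Submission
  imports Defs
begin


definition LB :: "('a::real_normed_vector \<Rightarrow> real) \<Rightarrow> bool" where
  "LB f \<longleftrightarrow> (\<forall>R. \<exists>L. \<forall>u v. norm u \<le> R \<longrightarrow> norm v \<le> R \<longrightarrow> \<bar>f u - f v\<bar> \<le> L * norm (u - v))"

lemma LB_bdd:
  assumes "LB f" shows "\<exists>M\<ge>0. \<forall>u. norm u \<le> R \<longrightarrow> \<bar>f u\<bar> \<le> M"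
proof -
  obtain L where L: "\<forall>u v. norm u \<le> max R 0 \<longrightarrow> norm v \<le> max R 0 \<longrightarrow> \<bar>f u - f v\<bar> \<le> L * norm (u - v)"
    using assms unfolding LB_def by blast
  show ?thesis
  proof (intro exI[of _ "\<bar>f 0\<bar> + \<bar>L\<bar> * max R 0"] conjI allI impI)
    fix u :: 'a assume u: "norm u \<le> R"
    have "\<bar>f u - f 0\<bar> \<le> L * norm u" using L[rule_format, of u 0] u by auto
    also have "\<dots> \<le> \<bar>L\<bar> * max R 0" using u by (intro mult_mono) auto
    finally show "\<bar>f u\<bar> \<le> \<bar>f 0\<bar> + \<bar>L\<bar> * max R 0" by linarith
  qed auto
qed

lemma LB_const: "LB (\<lambda>u. c)"
  unfolding LB_def by (auto intro!: exI[of _ 0])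

lemma LB_add: assumes "LB f" "LB g" shows "LB (\<lambda>u. f u + g u)"
  unfolding LB_def
proof
  fix R
  obtain L1 where L1: "\<forall>u v. norm u \<le> R \<longrightarrow> norm v \<le> R \<longrightarrow> \<bar>f u - f v\<bar> \<le> L1 * norm (u - v)"
    using assms(1) unfolding LB_def by blast
  obtain L2 where L2: "\<forall>u v. norm u \<le> R \<longrightarrow> norm v \<le> R \<longrightarrow> \<bar>g u - g v\<bar> \<le> L2 * norm (u - v)"
    using assms(2) unfolding LB_def by blast
  show "\<exists>L. \<forall>u v. norm u \<le> R \<longrightarrow> norm v \<le> R \<longrightarrow> \<bar>f u + g u - (f v + g v)\<bar> \<le> L * norm (u - v)"
  proof (intro exI[of _ "L1 + L2"] allI impI)
    fix u v :: 'a assume "norm u \<le> R" "norm v \<le> R"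
    then have "\<bar>f u - f v\<bar> \<le> L1 * norm (u - v)" "\<bar>g u - g v\<bar> \<le> L2 * norm (u - v)" using L1 L2 by auto
    then show "\<bar>f u + g u - (f v + g v)\<bar> \<le> (L1 + L2) * norm (u - v)" by (simp add: algebra_simps)
  qed
qed

lemma LB_minus: assumes "LB f" shows "LB (\<lambda>u. - f u)"
  unfolding LB_def
proof
  fix R
  obtain L where L: "\<forall>u v. norm u \<le> R \<longrightarrow> norm v \<le> R \<longrightarrow> \<bar>f u - f v\<bar> \<le> L * norm (u - v)"
    using assms unfolding LB_def by blast
  show "\<exists>L. \<forall>u v. norm u \<le> R \<longrightarrow> norm v \<le> R \<longrightarrow> \<bar>- f u - - f v\<bar> \<le> L * norm (u - v)"
    by (rule exI[of _ L]) (use L in \<open>auto simp: abs_minus_commute\<close>)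
qed

lemma LB_diff: assumes "LB f" "LB g" shows "LB (\<lambda>u. f u - g u)"
  using LB_add[OF assms(1) LB_minus[OF assms(2)]] by simp

lemma LB_mult: assumes "LB f" "LB g" shows "LB (\<lambda>u. f u * g u)"
  unfolding LB_def
proof
  fix R
  obtain L1 where L1: "\<forall>u v. norm u \<le> R \<longrightarrow> norm v \<le> R \<longrightarrow> \<bar>f u - f v\<bar> \<le> L1 * norm (u - v)"
    using assms(1) unfolding LB_def by blast
  obtain L2 where L2: "\<forall>u v. norm u \<le> R \<longrightarrow> norm v \<le> R \<longrightarrow> \<bar>g u - g v\<bar> \<le> L2 * norm (u - v)"
    using assms(2) unfolding LB_def by blast
  obtain M1 where M1: "M1 \<ge> 0" "\<forall>u. norm u \<le> R \<longrightarrow> \<bar>f u\<bar> \<le> M1" using LB_bdd[OF assms(1)] by blast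
  obtain M2 where M2: "M2 \<ge> 0" "\<forall>u. norm u \<le> R \<longrightarrow> \<bar>g u\<bar> \<le> M2" using LB_bdd[OF assms(2)] by blast
  show "\<exists>L. \<forall>u v. norm u \<le> R \<longrightarrow> norm v \<le> R \<longrightarrow> \<bar>f u * g u - f v * g v\<bar> \<le> L * norm (u - v)"
  proof (intro exI[of _ "M1 * L2 + M2 * L1"] allI impI)
    fix u v :: 'a assume uv: "norm u \<le> R" "norm v \<le> R"
    have e: "f u * g u - f v * g v = f u * (g u - g v) + g v * (f u - f v)" by (simp add: algebra_simps)
    have "\<bar>f u * (g u - g v)\<bar> \<le> M1 * (L2 * norm (u - v))"
      unfolding abs_mult using uv L2 M1 by (intro mult_mono) auto
    moreover have "\<bar>g v * (f u - f v)\<bar> \<le> M2 * (L1 * norm (u - v))"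
      unfolding abs_mult using uv L1 M2 by (intro mult_mono) auto
    ultimately show "\<bar>f u * g u - f v * g v\<bar> \<le> (M1 * L2 + M2 * L1) * norm (u - v)"
      unfolding e by (simp add: algebra_simps)
  qed
qed

lemma LB_power: assumes "LB f" shows "LB (\<lambda>u. f u ^ n)"
proof (induction n)
  case 0 show ?case using LB_const[of 1] by simp
next
  case (Suc n) show ?case using LB_mult[OF assms Suc] by (simp only: power_Suc)
qed

lemma LB_bounded_linear: assumes "bounded_linear f" shows "LB (\<lambda>u. f u)"
proof -
  obtain K where K: "\<And>x. norm (f x) \<le> norm x * K" using bounded_linear.bounded[OF assms] by blast
  show ?thesis unfolding LB_def
  proof (intro allI exI[of _ K] impI)
    fix u v
    have "\<bar>f u - f v\<bar> = norm (f (u - v))" by (simp add: linear_diff[OF bounded_linear.linear[OF assms]])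
    also have "\<dots> \<le> K * norm (u - v)" using K[of "u-v"] by (simp add: mult.commute)
    finally show "\<bar>f u - f v\<bar> \<le> K * norm (u - v)" .
  qed
qed

type_synonym st = "real \<times> real \<times> real \<times> real"

lemma LB_x0: "LB (\<lambda>u::st. fst u)"
  by (rule LB_bounded_linear) (intro bounded_linear_intros)
lemma LB_x1: "LB (\<lambda>u::st. fst (snd u))"
  by (rule LB_bounded_linear) (intro bounded_linear_intros)
lemma LB_x2: "LB (\<lambda>u::st. fst (snd (snd u)))"
  by (rule LB_bounded_linear) (intro bounded_linear_intros)
lemma LB_x3: "LB (\<lambda>u::st. snd (snd (snd u)))"
  by (rule LB_bounded_linear) (intro bounded_linear_intros)

lemma LB_p: assumes "LB f" "LB g" "LB h" shows "LB (\<lambda>u. bach_p (f u) (g u) (h u))"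
  unfolding bach_p_def by (intro LB_add LB_diff LB_mult LB_power LB_minus LB_const assms)
lemma LB_q: assumes "LB f" "LB g" "LB h" shows "LB (\<lambda>u. bach_q (f u) (g u) (h u))"
  unfolding bach_q_def by (intro LB_add LB_diff LB_mult LB_power LB_minus LB_const assms)

lemma norm_st: "norm ((a,b,c,d)::st) = sqrt (a^2+b^2+c^2+d^2)"
  by (simp add: norm_Pair add.assoc)


lemma deriv_cont_on:
  assumes "\<And>t. t \<ge> 0 \<Longrightarrow> (f has_real_derivative f' t) (at t within {0..})"
  shows "continuous_on {0..} f"
  unfolding continuous_on_eq_continuous_within using assms DERIV_continuous by fastforce

lemma within_to_at:
  assumes "t > 0" "(f has_real_derivative d) (at t within {0..})"
  shows "(f has_real_derivative d) (at t)"
proof -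
  have "(f has_real_derivative d) (at t within {0<..})"
    using assms(2) by (rule has_field_derivative_subset) auto
  then show ?thesis using at_within_open[of t "{0<..}"] assms(1) by auto
qed

lemma uniq4:
  fixes g0 g1 g2 g3 k0 k1 k2 k3 :: "real \<Rightarrow> real" and F0 F1 F2 F3 :: "st \<Rightarrow> real"
  assumes LB: "LB F0" "LB F1" "LB F2" "LB F3"
  and dg0: "\<And>t. t \<ge> 0 \<Longrightarrow> (g0 has_real_derivative F0 (g0 t, g1 t, g2 t, g3 t)) (at t within {0..})"
  and dg1: "\<And>t. t \<ge> 0 \<Longrightarrow> (g1 has_real_derivative F1 (g0 t, g1 t, g2 t, g3 t)) (at t within {0..})"
  and dg2: "\<And>t. t \<ge> 0 \<Longrightarrow> (g2 has_real_derivative F2 (g0 t, g1 t, g2 t, g3 t)) (at t within {0..})"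
  and dg3: "\<And>t. t \<ge> 0 \<Longrightarrow> (g3 has_real_derivative F3 (g0 t, g1 t, g2 t, g3 t)) (at t within {0..})"
  and dk0: "\<And>t. t \<ge> 0 \<Longrightarrow> (k0 has_real_derivative F0 (k0 t, k1 t, k2 t, k3 t)) (at t within {0..})"
  and dk1: "\<And>t. t \<ge> 0 \<Longrightarrow> (k1 has_real_derivative F1 (k0 t, k1 t, k2 t, k3 t)) (at t within {0..})"
  and dk2: "\<And>t. t \<ge> 0 \<Longrightarrow> (k2 has_real_derivative F2 (k0 t, k1 t, k2 t, k3 t)) (at t within {0..})"
  and dk3: "\<And>t. t \<ge> 0 \<Longrightarrow> (k3 has_real_derivative F3 (k0 t, k1 t, k2 t, k3 t)) (at t within {0..})"
  and init: "g0 0 = k0 0" "g1 0 = k1 0" "g2 0 = k2 0" "g3 0 = k3 0"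
  and T: "T \<ge> 0"
  shows "g0 T = k0 T \<and> g1 T = k1 T \<and> g2 T = k2 T \<and> g3 T = k3 T"
proof (cases "T = 0")
  case True then show ?thesis using init by simp
next
  case False
  then have T0: "T > 0" using T by simp
  define X where "X t = (g0 t, g1 t, g2 t, g3 t)" for t
  define Y where "Y t = (k0 t, k1 t, k2 t, k3 t)" for t
  have sub: "{0..T} \<subseteq> {0::real..}" by auto
  note cs = continuous_on_subset[OF deriv_cont_on sub]
  have cX: "continuous_on {0..T} X" unfolding X_def
    by (intro continuous_on_Pair cs[OF dg0] cs[OF dg1] cs[OF dg2] cs[OF dg3])
  have cY: "continuous_on {0..T} Y" unfolding Y_def
    by (intro continuous_on_Pair cs[OF dk0] cs[OF dk1] cs[OF dk2] cs[OF dk3])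
  obtain R1 where R1: "\<forall>x\<in>X ` {0..T}. norm x \<le> R1"
    using compact_imp_bounded[OF compact_continuous_image[OF cX compact_Icc]] bounded_iff by blast
  obtain R2 where R2: "\<forall>x\<in>Y ` {0..T}. norm x \<le> R2"
    using compact_imp_bounded[OF compact_continuous_image[OF cY compact_Icc]] bounded_iff by blast
  define R where "R = max R1 R2"
  have nX: "norm (X t) \<le> R" "norm (Y t) \<le> R" if "t \<in> {0..T}" for t
    using R1 R2 that unfolding R_def by (meson image_eqI max.coboundedI1 max.coboundedI2)+
  obtain L0 where L0: "\<forall>u v. norm u \<le> R \<longrightarrow> norm v \<le> R \<longrightarrow> \<bar>F0 u - F0 v\<bar> \<le> L0 * norm (u - v)"
    using LB(1) unfolding LB_def by blast
  obtain L1 where L1: "\<forall>u v. norm u \<le> R \<longrightarrow> norm v \<le> R \<longrightarrow> \<bar>F1 u - F1 v\<bar> \<le> L1 * norm (u - v)"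
    using LB(2) unfolding LB_def by blast
  obtain L2 where L2: "\<forall>u v. norm u \<le> R \<longrightarrow> norm v \<le> R \<longrightarrow> \<bar>F2 u - F2 v\<bar> \<le> L2 * norm (u - v)"
    using LB(3) unfolding LB_def by blast
  obtain L3 where L3: "\<forall>u v. norm u \<le> R \<longrightarrow> norm v \<le> R \<longrightarrow> \<bar>F3 u - F3 v\<bar> \<le> L3 * norm (u - v)"
    using LB(4) unfolding LB_def by blast
  define D where "D t = (g0 t - k0 t)^2 + (g1 t - k1 t)^2 + (g2 t - k2 t)^2 + (g3 t - k3 t)^2" for t
  define D' where "D' t = 2 * (g0 t - k0 t) * (F0 (X t) - F0 (Y t)) + 2 * (g1 t - k1 t) * (F1 (X t) - F1 (Y t))
     + 2 * (g2 t - k2 t) * (F2 (X t) - F2 (Y t)) + 2 * (g3 t - k3 t) * (F3 (X t) - F3 (Y t))" for t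
  define K where "K = 2 * (L0 + L1 + L2 + L3)"
  have dD: "(D has_real_derivative D' t) (at t within {0..})" if "t \<ge> 0" for t
    unfolding D_def D'_def X_def Y_def
    apply (rule derivative_eq_intros dg0 dg1 dg2 dg3 dk0 dk1 dk2 dk3 that refl | simp)+
    apply (simp add: algebra_simps)
    done
  have nD: "norm (X t - Y t) = sqrt (D t)" for t
    unfolding X_def Y_def D_def by (simp add: norm_st)
  have D0: "D t \<ge> 0" for t unfolding D_def by simp
  have sq: "\<bar>a\<bar> \<le> sqrt (D t)" if "a = g0 t - k0 t \<or> a = g1 t - k1 t \<or> a = g2 t - k2 t \<or> a = g3 t - k3 t" for a t
  proof -
    have "a^2 \<le> D t" using that unfolding D_def by auto
    then show ?thesis using real_sqrt_le_mono[of "a^2" "D t"] by simp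
  qed
  have trm: "2 * a * (F u - F v) \<le> 2 * L * D t"
    if "\<bar>a\<bar> \<le> sqrt (D t)" "\<bar>F u - F v\<bar> \<le> L * sqrt (D t)" for a t L and F :: "st \<Rightarrow> real" and u v
  proof -
    have "a * (F u - F v) \<le> \<bar>a\<bar> * \<bar>F u - F v\<bar>" by (metis abs_ge_self abs_mult)
    also have "\<dots> \<le> sqrt (D t) * (L * sqrt (D t))" using that D0[of t] by (intro mult_mono) auto
    also have "\<dots> = L * D t" using D0[of t] by (simp add: algebra_simps)
    finally show ?thesis by simp
  qed
  have D'le: "D' t \<le> K * D t" if "t \<in> {0..T}" for t
  proof -
    have "2 * (g0 t - k0 t) * (F0 (X t) - F0 (Y t)) \<le> 2 * L0 * D t"
    proof -
      have "\<bar>F0 (X t) - F0 (Y t)\<bar> \<le> L0 * sqrt (D t)" using L0[rule_format, OF nX[OF that]] unfolding nD .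
      then show ?thesis by (intro trm[OF sq]) auto
    qed
    moreover have "2 * (g1 t - k1 t) * (F1 (X t) - F1 (Y t)) \<le> 2 * L1 * D t"
    proof -
      have "\<bar>F1 (X t) - F1 (Y t)\<bar> \<le> L1 * sqrt (D t)" using L1[rule_format, OF nX[OF that]] unfolding nD .
      then show ?thesis by (intro trm[OF sq]) auto
    qed
    moreover have "2 * (g2 t - k2 t) * (F2 (X t) - F2 (Y t)) \<le> 2 * L2 * D t"
    proof -
      have "\<bar>F2 (X t) - F2 (Y t)\<bar> \<le> L2 * sqrt (D t)" using L2[rule_format, OF nX[OF that]] unfolding nD .
      then show ?thesis by (intro trm[OF sq]) auto
    qed
    moreover have "2 * (g3 t - k3 t) * (F3 (X t) - F3 (Y t)) \<le> 2 * L3 * D t"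
    proof -
      have "\<bar>F3 (X t) - F3 (Y t)\<bar> \<le> L3 * sqrt (D t)" using L3[rule_format, OF nX[OF that]] unfolding nD .
      then show ?thesis by (intro trm[OF sq]) auto
    qed
    ultimately show ?thesis unfolding D'_def K_def by (simp add: algebra_simps)
  qed
  define \<phi> where "\<phi> t = D t * exp (- K * t)" for t
  have "\<phi> T \<le> \<phi> 0"
  proof (rule DERIV_nonpos_imp_decreasing_open[OF T])
    fix z assume z: "0 < z" "z < T"
    have dDz: "(D has_real_derivative D' z) (at z)" using within_to_at[OF z(1) dD] z by simp
    have e: "((\<lambda>t. exp (- K * t)) has_real_derivative exp (- K * z) * (- K)) (at z)"
      using DERIV_fun_exp[OF DERIV_cmult_Id[of "- K" z]] by simp
    have "(\<phi> has_real_derivative (D' z * exp (- K * z) + exp (- K * z) * (- K) * D z)) (at z)"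
      unfolding \<phi>_def by (rule DERIV_mult[OF dDz e])
    moreover have "D' z * exp (- K * z) + exp (- K * z) * (- K) * D z = (D' z - K * D z) * exp (- K * z)"
      by (simp add: algebra_simps)
    moreover have "(D' z - K * D z) * exp (- K * z) \<le> 0"
      using D'le[of z] z by (intro mult_nonpos_nonneg) auto
    ultimately show "\<exists>y. (\<phi> has_real_derivative y) (at z) \<and> y \<le> 0" by auto
  next
    have cD: "continuous_on {0..T} D" using cs[OF dD] by simp
    show "continuous_on {0..T} \<phi>" unfolding \<phi>_def
      by (intro continuous_intros cD)
  qed
  moreover have "\<phi> 0 = 0" unfolding \<phi>_def D_def using init by simp
  ultimately have "D T * exp (- K * T) \<le> 0" unfolding \<phi>_def by simp
  then have "D T \<le> 0" by (simp add: mult_le_0_iff)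
  then have "D T = 0" using D0[of T] by linarith
  then have "(g0 T - k0 T)^2 = 0 \<and> (g1 T - k1 T)^2 = 0 \<and> (g2 T - k2 T)^2 = 0 \<and> (g3 T - k3 T)^2 = 0"
    unfolding D_def using zero_le_power2[of "g0 T - k0 T"] zero_le_power2[of "g1 T - k1 T"]
      zero_le_power2[of "g2 T - k2 T"] zero_le_power2[of "g3 T - k3 T"] by linarith
  then show ?thesis by simp
qed




lemma antideriv:
  fixes f :: "real \<Rightarrow> real"
  assumes "continuous_on UNIV f"
  shows "\<exists>F. F 0 = 0 \<and> (\<forall>s>-1. (F has_real_derivative f s) (at s))"
proof -
  let ?F = "\<lambda>u. integral {-1..u} f - integral {-1..0} f"
  have "(?F has_real_derivative f s) (at s)" if s: "s > -1" for s
  proof -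
  have "((\<lambda>u. integral {-1..u} f) has_vector_derivative f s) (at s within {-1..s+1})"
    by (rule integral_has_vector_derivative) (use assms s in \<open>auto intro: continuous_on_subset\<close>)
  moreover have "at s within {-1..s+1} = at s"
    by (rule at_within_interior) (use s in simp)
  ultimately have "((\<lambda>u. integral {-1..u} f) has_real_derivative f s) (at s)"
    by (simp add: has_real_derivative_iff_has_vector_derivative)
  then show "(?F has_real_derivative f s) (at s)"
    using DERIV_diff[OF _ DERIV_const] by fastforce
  qed
  then show ?thesis by (intro exI[of _ ?F]) auto
qed

lemma cube_root: "x > 0 \<Longrightarrow> (x powr (1/3)) ^ 3 = (x::real)"
  by (simp add: powr_realpow[symmetric] powr_powr)

lemma p_hom': "bach_p (v * x) (v * y) (v * z) = v^4 * bach_p x y z"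
  unfolding bach_p_def by algebra
lemma q_hom': "bach_q (v * x) (v * y) (v * z) = v^4 * bach_q x y z"
  unfolding bach_q_def by algebra
lemma p_hom: "bach_p (x/u) (y/u) (z/u) = bach_p x y z / u^4"
  using p_hom'[of "inverse u" x y z] by (simp add: divide_inverse mult.commute power_inverse)
lemma q_hom: "bach_q (x/u) (y/u) (z/u) = bach_q x y z / u^4"
  using q_hom'[of "inverse u" x y z] by (simp add: divide_inverse mult.commute power_inverse)
lemma p_sym: "bach_p y x z = bach_p x y z"
  unfolding bach_p_def by algebra
lemma q_sym: "bach_q x z y = bach_q x y z"
  unfolding bach_q_def by algebra
lemma pq_sum: "bach_p x y z + bach_q x y z + bach_q y z x + bach_q z x y = 0"
  unfolding bach_p_def bach_q_def by algebra
lemma p_val: "bach_p x (4*x) (4*x) = 9 * x^4"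
  unfolding bach_p_def by algebra




locale cons =
  fixes h0 h1 h2 h3 :: real and b c :: "real \<Rightarrow> real"
  assumes pos: "h0 > 0" "h1 > 0" "h2 > 0" "h3 > 0"
  and Psol: "P_solution (h0*h1*h2*h3) (h0 powr (1/3) * h2) (h0 powr (1/3) * h3) b c"
  and limb: "(b \<longlongrightarrow> (4*(h0*h1*h2*h3)) powr (1/3)) at_top"
  and limc: "(c \<longlongrightarrow> (4*(h0*h1*h2*h3)) powr (1/3)) at_top"
begin

definition "dh = h0*h1*h2*h3"
definition "L = (4*dh) powr (1/3)"
definition "a s = dh / (b s * c s)"
definition "r3 = h0 powr (1/3)"
definition "\<beta> = 1 / (6 * dh^2)"

lemma dh_pos: "dh > 0" unfolding dh_def using pos by simp
lemma L_pos: "L > 0" unfolding L_def using dh_pos by simp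
lemma L3: "L^3 = 4*dh" unfolding L_def using cube_root dh_pos by simp
lemma r3_pos: "r3 > 0" unfolding r3_def using pos by simp
lemma r33: "r3^3 = h0" unfolding r3_def using cube_root pos by simp
lemma beta_pos: "\<beta> > 0" unfolding \<beta>_def using dh_pos by simp

lemma bpos: "s \<ge> 0 \<Longrightarrow> b s > 0" and cpos: "s \<ge> 0 \<Longrightarrow> c s > 0"
  using Psol unfolding P_solution_def by auto
lemma b0: "b 0 = r3 * h2" and c0: "c 0 = r3 * h3"
  using Psol unfolding P_solution_def r3_def by auto
lemma apos: "s \<ge> 0 \<Longrightarrow> a s > 0"
  unfolding a_def using bpos cpos dh_pos by simp

lemma db: "s \<ge> 0 \<Longrightarrow> (b has_real_derivative (- (2/3) * bach_r (b s) (a s) (c s) * b s)) (at s within {0..})"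
  using Psol unfolding P_solution_def a_def dh_def by auto
lemma dc: "s \<ge> 0 \<Longrightarrow> (c has_real_derivative (- (2/3) * bach_r (c s) (a s) (b s) * c s)) (at s within {0..})"
  using Psol unfolding P_solution_def a_def dh_def by auto

lemma da: "s \<ge> 0 \<Longrightarrow> (a has_real_derivative ((2/3) * (bach_r (b s) (a s) (c s) + bach_r (c s) (a s) (b s)) * a s)) (at s within {0..})"
proof -
  assume s: "s \<ge> 0"
  have "((\<lambda>s. dh / (b s * c s)) has_real_derivative
        - (dh * ((- (2/3) * bach_r (b s) (a s) (c s) * b s) * c s + b s * (- (2/3) * bach_r (c s) (a s) (b s) * c s))) / (b s * c s)^2)
        (at s within {0..})"
    using bpos[OF s] cpos[OF s]
    by (auto intro!: derivative_eq_intros db[OF s] dc[OF s] simp: power2_eq_square)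
  moreover have "- (dh * ((- (2/3) * bach_r (b s) (a s) (c s) * b s) * c s + b s * (- (2/3) * bach_r (c s) (a s) (b s) * c s))) / (b s * c s)^2
     = (2/3) * (bach_r (b s) (a s) (c s) + bach_r (c s) (a s) (b s)) * a s"
    using bpos[OF s] cpos[OF s] unfolding a_def by (simp add: field_simps power2_eq_square)
  ultimately show ?thesis unfolding a_def[abs_def] by simp
qed

lemma cont_b: "continuous_on {0..} b" by (rule deriv_cont_on[OF db])
lemma cont_c: "continuous_on {0..} c" by (rule deriv_cont_on[OF dc])
lemma cont_a: "continuous_on {0..} a" by (rule deriv_cont_on[OF da])

lemma cont_max: "continuous_on {0::real..} f \<Longrightarrow> continuous_on UNIV (\<lambda>s::real. f (max s 0))"
proof -
  assume f: "continuous_on {0..} f"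
  have "continuous_on UNIV (\<lambda>s::real. max s 0)" by (intro continuous_on_max continuous_on_id continuous_on_const)
  moreover have "range (\<lambda>s::real. max s 0) \<subseteq> {0..}" by auto
  ultimately show ?thesis using continuous_on_compose2[OF f] by blast
qed

definition "pf s = bach_p (a (max s 0)) (b (max s 0)) (c (max s 0))"

lemma cont_pf: "continuous_on UNIV pf"
  unfolding pf_def bach_p_def
  by (intro continuous_intros cont_max cont_a cont_b cont_c)

definition "\<psi> = (SOME F. F 0 = 0 \<and> (\<forall>s>-1. (F has_real_derivative pf s) (at s)))"

lemma psi: "\<psi> 0 = 0" "s > -1 \<Longrightarrow> (\<psi> has_real_derivative pf s) (at s)"
  using someI_ex[OF antideriv[OF cont_pf]] unfolding \<psi>_def[symmetric] by auto

definition "U s = r3 * exp (- \<psi> s / 3)"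

lemma Upos: "U s > 0" unfolding U_def using r3_pos by simp
lemma U0: "U 0 = r3" unfolding U_def using psi by simp
lemma dU: "s > -1 \<Longrightarrow> (U has_real_derivative (- (pf s / 3) * U s)) (at s)"
  unfolding U_def[abs_def] by (auto intro!: derivative_eq_intros psi(2))

lemma a_lim: "(a \<longlongrightarrow> L/4) at_top"
proof -
  have "(a \<longlongrightarrow> dh / (L * L)) at_top"
    unfolding a_def[abs_def] using limb limc L_pos unfolding L_def dh_def
    by (auto intro!: tendsto_intros)
  moreover have "dh / (L * L) = L/4" using L3 L_pos by (simp add: field_simps power3_eq_cube)
  ultimately show ?thesis by simp
qed

lemma b_lim: "(b \<longlongrightarrow> L) at_top" using limb unfolding L_def dh_def .
lemma c_lim: "(c \<longlongrightarrow> L) at_top" using limc unfolding L_def dh_def .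

definition "plim = 9 * (L/4)^4"

lemma pf_lim: "(pf \<longlongrightarrow> plim) at_top"
proof -
  have "((\<lambda>s. bach_p (a s) (b s) (c s)) \<longlongrightarrow> bach_p (L/4) L L) at_top"
    unfolding bach_p_def by (intro tendsto_intros a_lim b_lim c_lim)
  moreover have "bach_p (L/4) L L = plim" unfolding plim_def using p_val[of "L/4"] by simp
  moreover have "eventually (\<lambda>s. bach_p (a s) (b s) (c s) = pf s) at_top"
    unfolding pf_def using eventually_ge_at_top[of 0] by eventually_elim (simp add: max_def)
  ultimately show ?thesis using tendsto_cong by metis
qed

lemma plim_pos: "plim > 0" unfolding plim_def using L_pos by simp

lemma psi_top: "filterlim \<psi> at_top at_top"
proof -
  have "eventually (\<lambda>s. pf s > plim/2) at_top"
    using order_tendstoD(1)[OF pf_lim, of "plim/2"] plim_pos by simp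
  then obtain s0 where s0: "\<And>s. s \<ge> s0 \<Longrightarrow> pf s > plim/2" unfolding eventually_at_top_linorder by blast
  define s1 where "s1 = max s0 0"
  have lin: "\<psi> s \<ge> \<psi> s1 + plim/2 * (s - s1)" if "s \<ge> s1" for s
  proof -
    have "(\<lambda>x. \<psi> x - plim/2 * x) s1 \<le> (\<lambda>x. \<psi> x - plim/2 * x) s"
    proof (rule DERIV_nonneg_imp_nondecreasing[OF that])
      fix x assume x: "s1 \<le> x" "x \<le> s"
      have "x > -1" using x unfolding s1_def by simp
      then have "((\<lambda>x. \<psi> x - plim/2 * x) has_real_derivative pf x - plim/2 * 1) (at x)"
        using DERIV_diff[OF psi(2)[of x] DERIV_cmult_Id[of "plim/2" x]] by simp
      moreover have "pf x - plim/2 * 1 \<ge> 0" using s0[of x] x unfolding s1_def by simp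
      ultimately show "\<exists>y. ((\<lambda>x. \<psi> x - plim/2 * x) has_real_derivative y) (at x) \<and> 0 \<le> y" by blast
    qed
    then have A: "\<psi> s1 - plim/2 * s1 \<le> \<psi> s - plim/2 * s" by simp
    have B: "plim/2 * (s - s1) = plim/2 * s - plim/2 * s1" by (simp add: right_diff_distrib)
    show ?thesis using A B by linarith
  qed
  show ?thesis unfolding filterlim_at_top
  proof
    fix Z
    show "eventually (\<lambda>s. Z \<le> \<psi> s) at_top"
      unfolding eventually_at_top_linorder
    proof (intro exI[of _ "s1 + \<bar>Z - \<psi> s1\<bar> / (plim/2)"] allI impI)
      fix s assume s: "s1 + \<bar>Z - \<psi> s1\<bar> / (plim/2) \<le> s"
      have "\<bar>Z - \<psi> s1\<bar> / (plim/2) \<ge> 0" using plim_pos by simp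
      then have "s \<ge> s1" using s by linarith
      have "plim/2 * (s - s1) \<ge> \<bar>Z - \<psi> s1\<bar>" using s plim_pos by (simp add: field_simps)
      then show "Z \<le> \<psi> s" using lin[OF \<open>s \<ge> s1\<close>] by linarith
    qed
  qed
qed

lemma U_lim: "(U \<longlongrightarrow> 0) at_top"
proof -
  have "filterlim (\<lambda>s. 1/3 * \<psi> s) at_top at_top"
    by (rule filterlim_tendsto_pos_mult_at_top[OF tendsto_const _ psi_top]) simp
  then have "filterlim (\<lambda>s. - (1/3 * \<psi> s)) at_bot at_top"
    using filterlim_uminus_at_top[THEN iffD1] by blast
  then have "filterlim (\<lambda>s. - \<psi> s / 3) at_bot at_top" by simp
  then have "((\<lambda>s. exp (- \<psi> s / 3)) \<longlongrightarrow> 0) at_top"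
    using filterlim_compose[OF exp_at_bot] by blast
  then show ?thesis unfolding U_def[abs_def] using tendsto_mult_right_zero by blast
qed

end



context cons begin

lemma U_cont: "continuous_on {0..} U"
  by (rule deriv_cont_on[of _ "\<lambda>s. - (pf s / 3) * U s"]) (rule has_field_derivative_at_within, rule dU, simp)

definition "kf s = 1 / (\<beta> * U (max s 0) ^ 2)"

lemma Une: "U x \<noteq> 0" using Upos[of x] by simp
lemma kf_pos: "kf s > 0" unfolding kf_def using beta_pos Upos[of "max s 0"] by simp

lemma cont_kf: "continuous_on UNIV kf"
proof -
  have "continuous_on UNIV (\<lambda>s. U (max s 0))" by (rule cont_max[OF U_cont])
  then show ?thesis unfolding kf_def using beta_pos
    by (intro continuous_intros) (auto simp: Une)
qed

definition "T = (SOME F. F 0 = 0 \<and> (\<forall>s>-1. (F has_real_derivative kf s) (at s)))"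

lemma Tp: "T 0 = 0" "s > -1 \<Longrightarrow> (T has_real_derivative kf s) (at s)"
  using someI_ex[OF antideriv[OF cont_kf]] unfolding T_def[symmetric] by auto

lemma T_mono: assumes "-1 < x" "x < y" shows "T x < T y"
proof (rule DERIV_pos_imp_increasing[OF assms(2)])
  fix z assume "x \<le> z" "z \<le> y"
  then have "z > -1" using assms by simp
  then show "\<exists>d. (T has_real_derivative d) (at z) \<and> d > 0" using Tp(2) kf_pos by blast
qed

lemma T_isCont: "s > -1 \<Longrightarrow> isCont T s"
  using DERIV_continuous Tp(2) by blast

lemma T_top: "\<exists>s\<ge>0. T s \<ge> y"
proof -
  have "((\<lambda>s. \<beta> * U s ^ 2) \<longlongrightarrow> \<beta> * 0 ^ 2) at_top"
    by (intro tendsto_intros U_lim)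
  then have lim0: "((\<lambda>s. \<beta> * U s ^ 2) \<longlongrightarrow> 0) at_top" by simp
  have "eventually (\<lambda>s. \<beta> * U s ^ 2 < 1) at_top"
    using order_tendstoD(2)[OF lim0, of 1] by simp
  then obtain s0 where s0: "\<And>s. s \<ge> s0 \<Longrightarrow> \<beta> * U s ^ 2 < 1"
    unfolding eventually_at_top_linorder by blast
  define s1 where "s1 = max s0 0"
  have kf1: "kf s \<ge> 1" if "s \<ge> s1" for s
  proof -
    have "max s 0 = s" "s \<ge> s0" using that unfolding s1_def by auto
    then have "\<beta> * U s ^ 2 < 1" using s0 by simp
    moreover have "\<beta> * U s ^ 2 > 0" using beta_pos Upos[of s] by simp
    ultimately show ?thesis unfolding kf_def using \<open>max s 0 = s\<close> by simp
  qed
  have lin: "T s \<ge> T s1 + (s - s1)" if "s \<ge> s1" for s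
  proof -
    have "(\<lambda>x. T x - x) s1 \<le> (\<lambda>x. T x - x) s"
    proof (rule DERIV_nonneg_imp_nondecreasing[OF that])
      fix x assume x: "s1 \<le> x" "x \<le> s"
      have "x > -1" using x unfolding s1_def by simp
      then have "((\<lambda>x. T x - x) has_real_derivative kf x - 1) (at x)"
        using DERIV_diff[OF Tp(2)[of x] DERIV_ident] by simp
      moreover have "kf x - 1 \<ge> 0" using kf1[of x] x by simp
      ultimately show "\<exists>y. ((\<lambda>x. T x - x) has_real_derivative y) (at x) \<and> 0 \<le> y" by blast
    qed
    then show ?thesis by simp
  qed
  show ?thesis
  proof (intro exI conjI)
    show "s1 + \<bar>y - T s1\<bar> \<ge> 0" unfolding s1_def by simp
    show "T (s1 + \<bar>y - T s1\<bar>) \<ge> y" using lin[of "s1 + \<bar>y - T s1\<bar>"] by simp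
  qed
qed

definition "y0 = T (-1/2)"
lemma y0_neg: "y0 < 0" unfolding y0_def using T_mono[of "-1/2" 0] Tp(1) by simp

lemma S_ex1: assumes "y > y0" shows "\<exists>!s. s > -1/2 \<and> T s = y"
proof -
  obtain sb where sb: "sb \<ge> 0" "T sb \<ge> y" using T_top by blast
  have "\<exists>x\<ge>-1/2. x \<le> sb \<and> T x = y"
  proof (rule IVT)
    show "T (-1/2) \<le> y" using assms unfolding y0_def by simp
    show "y \<le> T sb" using sb by simp
    show "-1/2 \<le> sb" using sb by simp
    show "\<forall>x. -1/2 \<le> x \<and> x \<le> sb \<longrightarrow> isCont T x" using T_isCont by simp
  qed
  then obtain x where x: "x \<ge> -1/2" "T x = y" by blast
  have "x \<noteq> -1/2" using x assms unfolding y0_def by auto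
  then have ex: "x > -1/2 \<and> T x = y" using x by simp
  show ?thesis
  proof (rule ex1I[of _ x])
    show "x > -1/2 \<and> T x = y" by (rule ex)
  next
    fix s assume s: "s > -1/2 \<and> T s = y"
    show "s = x"
    proof (rule ccontr)
      assume "s \<noteq> x"
      then have "s < x \<or> x < s" by linarith
      moreover have "s > -1" "x > -1" using s ex by auto
      ultimately show False using T_mono[of s x] T_mono[of x s] s ex by linarith
    qed
  qed
qed

definition "S y = (THE s. s > -1/2 \<and> T s = y)"

lemma S_prop: "y > y0 \<Longrightarrow> S y > -1/2 \<and> T (S y) = y"
  unfolding S_def by (rule theI'[OF S_ex1])

lemma S_T: assumes "z > -1/2" shows "S (T z) = z"
proof -
  have Tz: "T z > y0" unfolding y0_def using T_mono[of "-1/2" z] assms by simp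
  show ?thesis unfolding S_def by (rule the1_equality[OF S_ex1[OF Tz]]) (use assms in simp)
qed

lemma S0: "S 0 = 0" using S_T[of 0] Tp(1) by simp

lemma S_nonneg: assumes "t \<ge> 0" shows "S t \<ge> 0"
proof (rule ccontr)
  assume "\<not> S t \<ge> 0"
  moreover have "S t > -1/2" "T (S t) = t" using S_prop[of t] assms y0_neg by auto
  ultimately have "T (S t) < T 0" using T_mono[of "S t" 0] by simp
  then show False using Tp(1) assms \<open>T (S t) = t\<close> by simp
qed

lemma S_top: "filterlim S at_top at_top"
  unfolding filterlim_at_top
proof
  fix Z :: real
  show "eventually (\<lambda>t. Z \<le> S t) at_top"
    unfolding eventually_at_top_linorder
  proof (intro exI[of _ "max (T (max Z 0)) 0"] allI impI)
    fix t assume t: "max (T (max Z 0)) 0 \<le> t"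
    have "S t > -1/2" "T (S t) = t" using S_prop[of t] t y0_neg by auto
    show "Z \<le> S t"
    proof (rule ccontr)
      assume "\<not> Z \<le> S t"
      then have "S t < max Z 0" by simp
      moreover have "S t > -1" using \<open>S t > -1/2\<close> by simp
      ultimately have "T (S t) < T (max Z 0)" using T_mono[of "S t" "max Z 0"] by blast
      then show False using t \<open>T (S t) = t\<close> by simp
    qed
  qed
qed

lemma dS: assumes t: "t \<ge> 0" shows "(S has_real_derivative \<beta> * U (S t) ^ 2) (at t)"
proof -
  have St: "S t > -1/2" "T (S t) = t" "S t \<ge> 0" using S_prop[of t] t y0_neg S_nonneg[OF t] by auto
  define d where "d = (S t + 1/2) / 2"
  have d: "d > 0" using St unfolding d_def by simp
  have "isCont S (T (S t))"
  proof (rule isCont_inverse_function[OF d, where x = "S t" and f = T and g = S])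
    fix z assume z: "\<bar>z - S t\<bar> \<le> d"
    have "z \<ge> S t - d" using z by linarith
    moreover have "S t - d > -1/2" using St(1) unfolding d_def by (simp add: field_simps)
    ultimately have z2: "z > -1/2" by linarith
    show "S (T z) = z" using S_T[OF z2] .
    show "isCont T z" using T_isCont z2 by simp
  qed
  then have cont: "isCont S t" using St by simp
  have "(S has_real_derivative inverse (kf (S t))) (at t)"
  proof (rule DERIV_inverse_function[where a = y0 and b = "t+1"])
    show "(T has_real_derivative kf (S t)) (at (S t))" using Tp(2) St by simp
    show "kf (S t) \<noteq> 0" using kf_pos[of "S t"] by simp
    show "y0 < t" "t < t + 1" using t y0_neg by auto
    show "\<And>y. y0 < y \<Longrightarrow> y < t + 1 \<Longrightarrow> T (S y) = y" using S_prop by blast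
    show "isCont S t" by (rule cont)
  qed
  moreover have "inverse (kf (S t)) = \<beta> * U (S t) ^ 2"
    unfolding kf_def using St(3) by (simp add: max_def)
  ultimately show ?thesis by simp
qed

end



lemma p_sym2: "bach_p x z y = bach_p x y z"
  unfolding bach_p_def by algebra

lemma atom0: "(W::real) \<noteq> 0 \<Longrightarrow> of_nat 3 * ((- (P / 3) * W) * (\<beta> * W^2) * W^(3 - Suc 0)) = - \<beta> * (P / W^4) * (W^3)^3"
  by (simp add: field_simps) (simp add: power_numeral_reduce)
lemma atom1: "(W::real) \<noteq> 0 \<Longrightarrow> (((2/3) * ((P + 3*Q1)/2 + (P + 3*Q2)/2) * A) * (\<beta>*W^2)*W - A*((-(P/3)*W)*(\<beta>*W^2)))/(W*W) = -\<beta> * ((-(P+Q1+Q2))/W^4) * (W^3)^2 * (A/W)"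
  by (simp add: field_simps; simp add: algebra_simps flip: power_add)
lemma atom2: "(W::real) \<noteq> 0 \<Longrightarrow> ((- (2/3) * ((P + 3*Q)/2) * B) * (\<beta> * W^2) * W - B * ((- (P / 3) * W) * (\<beta> * W^2))) / (W * W) = - \<beta> * (Q/W^4) * (W^3)^2 * (B/W)"
  by (simp add: field_simps; simp add: algebra_simps flip: power_add)

lemma div_cancel: "(u::real) \<noteq> 0 \<Longrightarrow> (x/u)/(y/u) = x/y"
  by (cases "y = 0") (simp_all add: divide_simps)

context cons begin

definition "G0 t = U (S t) ^ 3"
definition "G1 t = a (S t) / U (S t)"
definition "G2 t = b (S t) / U (S t)"
definition "G3 t = c (S t) / U (S t)"

lemma pf_eq: "s \<ge> 0 \<Longrightarrow> pf s = bach_p (a s) (b s) (c s)"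
  unfolding pf_def by (simp add: max_def)

lemma dUS: assumes t: "t \<ge> 0"
  shows "((\<lambda>t. U (S t)) has_real_derivative (- (pf (S t) / 3) * U (S t)) * (\<beta> * U (S t) ^ 2)) (at t within {0..})"
proof -
  have "S t \<ge> 0" using S_nonneg[OF t] .
  then have "(U has_real_derivative - (pf (S t) / 3) * U (S t)) (at (S t))" using dU by simp
  from DERIV_chain2[OF this dS[OF t]] show ?thesis by (rule has_field_derivative_at_within)
qed

lemma chainS:
  assumes t: "t \<ge> 0" and df: "\<And>s. s \<ge> 0 \<Longrightarrow> (f has_real_derivative f' s) (at s within {0..})"
  shows "((\<lambda>t. f (S t)) has_real_derivative f' (S t) * (\<beta> * U (S t) ^ 2)) (at t within {0..})"
proof -
  have sub: "S ` {0..} \<subseteq> {0..}" using S_nonneg by auto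
  have "(f has_real_derivative f' (S t)) (at (S t) within S ` {0..})"
    using df[OF S_nonneg[OF t]] sub by (rule has_field_derivative_subset)
  from DERIV_image_chain[OF this has_field_derivative_at_within[OF dS[OF t]]] show ?thesis
    by (simp add: o_def)
qed

lemma dG0: assumes t: "t \<ge> 0"
  shows "(G0 has_real_derivative (- \<beta> * bach_p (G1 t) (G2 t) (G3 t) * (G0 t)^3)) (at t within {0..})"
proof -
  define s where "s = S t"
  have s: "s \<ge> 0" unfolding s_def using S_nonneg[OF t] .
  have V: "U s > 0" using Upos .
  from DERIV_power[OF dUS[OF t], of 3]
  have "(G0 has_real_derivative of_nat 3 * ((- (pf s / 3) * U s) * (\<beta> * U s ^ 2) * U s ^ (3 - Suc 0))) (at t within {0..})"
    unfolding G0_def[abs_def] s_def .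
  moreover have E: "of_nat 3 * ((- (pf s / 3) * U s) * (\<beta> * U s ^ 2) * U s ^ (3 - Suc 0))
      = - \<beta> * bach_p (G1 t) (G2 t) (G3 t) * (G0 t)^3"
    unfolding G0_def G1_def G2_def G3_def s_def[symmetric] p_hom pf_eq[OF s]
    using V by (simp add: field_simps) (simp add: power_numeral_reduce)
  ultimately show ?thesis unfolding E by blast
qed

lemma dG2: assumes t: "t \<ge> 0"
  shows "(G2 has_real_derivative (- \<beta> * bach_q (G2 t) (G3 t) (G1 t) * (G0 t)^2 * G2 t)) (at t within {0..})"
proof -
  define s where "s = S t"
  have s: "s \<ge> 0" unfolding s_def using S_nonneg[OF t] .
  have V: "U s > 0" using Upos .
  from DERIV_divide[OF chainS[OF t db] dUS[OF t]] V
  have "(G2 has_real_derivative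
     ((- (2/3) * bach_r (b s) (a s) (c s) * b s) * (\<beta> * U s ^ 2) * U s - b s * ((- (pf s / 3) * U s) * (\<beta> * U s ^ 2))) / (U s * U s))
     (at t within {0..})"
    unfolding G2_def[abs_def] s_def by simp
  moreover have E: "((- (2/3) * bach_r (b s) (a s) (c s) * b s) * (\<beta> * U s ^ 2) * U s - b s * ((- (pf s / 3) * U s) * (\<beta> * U s ^ 2))) / (U s * U s)
      = - \<beta> * bach_q (G2 t) (G3 t) (G1 t) * (G0 t)^2 * G2 t"
    unfolding G0_def G1_def G2_def G3_def s_def[symmetric] q_hom pf_eq[OF s] bach_r_def
      p_sym[of "b s" "a s"] q_sym[of "b s" "a s"]
    using V by (simp add: field_simps)
  ultimately show ?thesis unfolding E by blast
qed

lemma dG3: assumes t: "t \<ge> 0"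
  shows "(G3 has_real_derivative (- \<beta> * bach_q (G3 t) (G1 t) (G2 t) * (G0 t)^2 * G3 t)) (at t within {0..})"
proof -
  define s where "s = S t"
  have s: "s \<ge> 0" unfolding s_def using S_nonneg[OF t] .
  have V: "U s > 0" using Upos .
  from DERIV_divide[OF chainS[OF t dc] dUS[OF t]] V
  have "(G3 has_real_derivative
     ((- (2/3) * bach_r (c s) (a s) (b s) * c s) * (\<beta> * U s ^ 2) * U s - c s * ((- (pf s / 3) * U s) * (\<beta> * U s ^ 2))) / (U s * U s))
     (at t within {0..})"
    unfolding G3_def[abs_def] s_def by simp
  moreover have E: "((- (2/3) * bach_r (c s) (a s) (b s) * c s) * (\<beta> * U s ^ 2) * U s - c s * ((- (pf s / 3) * U s) * (\<beta> * U s ^ 2))) / (U s * U s)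
      = - \<beta> * bach_q (G3 t) (G1 t) (G2 t) * (G0 t)^2 * G3 t"
    unfolding G0_def G1_def G2_def G3_def s_def[symmetric] q_hom pf_eq[OF s] bach_r_def
      p_sym[of "c s" "a s"] p_sym2[of "a s" "c s" "b s"]
    using V by (simp add: field_simps)
  ultimately show ?thesis unfolding E by blast
qed

lemma dG1: assumes t: "t \<ge> 0"
  shows "(G1 has_real_derivative (- \<beta> * bach_q (G1 t) (G2 t) (G3 t) * (G0 t)^2 * G1 t)) (at t within {0..})"
proof -
  define s where "s = S t"
  have s: "s \<ge> 0" unfolding s_def using S_nonneg[OF t] .
  have V: "U s > 0" using Upos .
  from DERIV_divide[OF chainS[OF t da] dUS[OF t]] V
  have "(G1 has_real_derivative
     (((2/3) * (bach_r (b s) (a s) (c s) + bach_r (c s) (a s) (b s)) * a s) * (\<beta> * U s ^ 2) * U s - a s * ((- (pf s / 3) * U s) * (\<beta> * U s ^ 2))) / (U s * U s))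
     (at t within {0..})"
    unfolding G1_def[abs_def] s_def by simp
  moreover have E: "(((2/3) * (bach_r (b s) (a s) (c s) + bach_r (c s) (a s) (b s)) * a s) * (\<beta> * U s ^ 2) * U s - a s * ((- (pf s / 3) * U s) * (\<beta> * U s ^ 2))) / (U s * U s)
      = - \<beta> * bach_q (G1 t) (G2 t) (G3 t) * (G0 t)^2 * G1 t"
  proof -
    have e: "bach_q (a s) (b s) (c s) = - (bach_p (a s) (b s) (c s) + bach_q (b s) (c s) (a s) + bach_q (c s) (a s) (b s))"
      using pq_sum[of "a s" "b s" "c s"] by linarith
    show ?thesis
      unfolding G0_def G1_def G2_def G3_def s_def[symmetric] q_hom pf_eq[OF s] bach_r_def e
        p_sym[of "c s" "a s"] p_sym2[of "a s" "c s" "b s"] p_sym[of "b s" "a s"] q_sym[of "b s" "a s"]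
      using V by (intro atom1) simp
  qed
  ultimately show ?thesis unfolding E by blast
qed

lemma G_init: "G0 0 = h0" "G1 0 = h1" "G2 0 = h2" "G3 0 = h3"
proof -
  have V: "U (S 0) = r3" using S0 U0 by simp
  show "G0 0 = h0" unfolding G0_def V using r33 .
  show "G2 0 = h2" unfolding G2_def V using S0 b0 r3_pos by simp
  show "G3 0 = h3" unfolding G3_def V using S0 c0 r3_pos by simp
  have a0: "a 0 = h0 * h1 / (r3 * r3)" unfolding a_def b0 c0 dh_def using r3_pos pos
    by (simp add: field_simps)
  have c3: "r3 * r3 * r3 = h0" using r33[unfolded power3_eq_cube] .
  have "G1 0 = h0 * h1 / (r3 * r3) / r3" unfolding G1_def S0 a0 U0 by simp
  also have "\<dots> = h0 * h1 / (r3 * r3 * r3)" by simp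
  also have "\<dots> = h1" unfolding c3 using pos by simp
  finally show "G1 0 = h1" .
qed

lemma G_sol: "S3_solution h0 h1 h2 h3 G0 G1 G2 G3"
  unfolding S3_solution_def Let_def using G_init dG0 dG1 dG2 dG3
  unfolding \<beta>_def dh_def by simp

lemma US_lim: "((\<lambda>t. U (S t)) \<longlongrightarrow> 0) at_top"
  using filterlim_compose[OF U_lim S_top] .

lemma ev_pos: "eventually (\<lambda>t::real. t \<ge> 0) at_top" by (rule eventually_ge_at_top)

lemma G_lims:
  "(G0 \<longlongrightarrow> 0) at_top" "filterlim G1 at_top at_top" "filterlim G2 at_top at_top" "filterlim G3 at_top at_top"
  "((\<lambda>t. G2 t / G1 t) \<longlongrightarrow> 4) at_top" "((\<lambda>t. G2 t / G3 t) \<longlongrightarrow> 1) at_top"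
proof -
  have aS: "((\<lambda>t. a (S t)) \<longlongrightarrow> L/4) at_top" using filterlim_compose[OF a_lim S_top] .
  have bS: "((\<lambda>t. b (S t)) \<longlongrightarrow> L) at_top" using filterlim_compose[OF b_lim S_top] .
  have cS: "((\<lambda>t. c (S t)) \<longlongrightarrow> L) at_top" using filterlim_compose[OF c_lim S_top] .
  have Up: "eventually (\<lambda>t. 0 < U (S t)) at_top" using Upos by simp
  show "(G0 \<longlongrightarrow> 0) at_top"
    unfolding G0_def[abs_def] using tendsto_power[OF US_lim, of 3] by simp
  show "filterlim G1 at_top at_top"
    unfolding G1_def[abs_def] by (rule LIM_at_top_divide[OF aS _ US_lim Up]) (use L_pos in simp)
  show "filterlim G2 at_top at_top"
    unfolding G2_def[abs_def] by (rule LIM_at_top_divide[OF bS _ US_lim Up]) (use L_pos in simp)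
  show "filterlim G3 at_top at_top"
    unfolding G3_def[abs_def] by (rule LIM_at_top_divide[OF cS _ US_lim Up]) (use L_pos in simp)
  have "((\<lambda>t. b (S t) / a (S t)) \<longlongrightarrow> L / (L/4)) at_top"
    by (rule tendsto_divide[OF bS aS]) (use L_pos in simp)
  moreover have "L / (L/4) = 4" using L_pos by simp
  ultimately have l1: "((\<lambda>t. b (S t) / a (S t)) \<longlongrightarrow> 4) at_top" by simp
  have "eventually (\<lambda>t. b (S t) / a (S t) = G2 t / G1 t) at_top"
    unfolding G1_def G2_def by (rule always_eventually) (simp only: div_cancel[OF Une] refl simp_thms)
  from tendsto_cong[OF this, THEN iffD1, OF l1]
  show "((\<lambda>t. G2 t / G1 t) \<longlongrightarrow> 4) at_top" .
  have "((\<lambda>t. b (S t) / c (S t)) \<longlongrightarrow> L / L) at_top"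
    by (rule tendsto_divide[OF bS cS]) (use L_pos in simp)
  moreover have "L / L = 1" using L_pos by simp
  ultimately have l2: "((\<lambda>t. b (S t) / c (S t)) \<longlongrightarrow> 1) at_top" by simp
  have "eventually (\<lambda>t. b (S t) / c (S t) = G2 t / G3 t) at_top"
    unfolding G3_def G2_def by (rule always_eventually) (simp only: div_cancel[OF Une] refl simp_thms)
  from tendsto_cong[OF this, THEN iffD1, OF l2]
  show "((\<lambda>t. G2 t / G3 t) \<longlongrightarrow> 1) at_top" .
qed

end



lemma S3_uniq:
  assumes g: "S3_solution h0 h1 h2 h3 g0 g1 g2 g3" and k: "S3_solution h0 h1 h2 h3 k0 k1 k2 k3"
    and t: "t \<ge> 0"
  shows "g0 t = k0 t \<and> g1 t = k1 t \<and> g2 t = k2 t \<and> g3 t = k3 t"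
proof -
  define \<beta> where "\<beta> = 1 / (6 * (h0*h1*h2*h3)^2)"
  define F0 where "F0 = (\<lambda>u::st. - \<beta> * bach_p (fst (snd u)) (fst (snd (snd u))) (snd (snd (snd u))) * (fst u) ^ 3)"
  define F1 where "F1 = (\<lambda>u::st. - \<beta> * bach_q (fst (snd u)) (fst (snd (snd u))) (snd (snd (snd u))) * (fst u) ^ 2 * fst (snd u))"
  define F2 where "F2 = (\<lambda>u::st. - \<beta> * bach_q (fst (snd (snd u))) (snd (snd (snd u))) (fst (snd u)) * (fst u) ^ 2 * fst (snd (snd u)))"
  define F3 where "F3 = (\<lambda>u::st. - \<beta> * bach_q (snd (snd (snd u))) (fst (snd u)) (fst (snd (snd u))) * (fst u) ^ 2 * snd (snd (snd u)))"
  have L0: "LB F0" unfolding F0_def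
    by (intro LB_mult LB_const LB_p LB_power LB_x0 LB_x1 LB_x2 LB_x3)
  have L1: "LB F1" unfolding F1_def
    by (intro LB_mult LB_const LB_q LB_power LB_x0 LB_x1 LB_x2 LB_x3)
  have L2: "LB F2" unfolding F2_def
    by (intro LB_mult LB_const LB_q LB_power LB_x0 LB_x1 LB_x2 LB_x3)
  have L3: "LB F3" unfolding F3_def
    by (intro LB_mult LB_const LB_q LB_power LB_x0 LB_x1 LB_x2 LB_x3)
  note gd = g[unfolded S3_solution_def Let_def \<beta>_def[symmetric]]
  note kd = k[unfolded S3_solution_def Let_def \<beta>_def[symmetric]]
  show ?thesis
  proof (rule uniq4[OF L0 L1 L2 L3, of g0 g1 g2 g3 k0 k1 k2 k3 t])
    show "\<And>t. 0 \<le> t \<Longrightarrow> (g0 has_real_derivative F0 (g0 t, g1 t, g2 t, g3 t)) (at t within {0..})"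
      using gd unfolding F0_def by simp
    show "\<And>t. 0 \<le> t \<Longrightarrow> (g1 has_real_derivative F1 (g0 t, g1 t, g2 t, g3 t)) (at t within {0..})"
      using gd unfolding F1_def by simp
    show "\<And>t. 0 \<le> t \<Longrightarrow> (g2 has_real_derivative F2 (g0 t, g1 t, g2 t, g3 t)) (at t within {0..})"
      using gd unfolding F2_def by simp
    show "\<And>t. 0 \<le> t \<Longrightarrow> (g3 has_real_derivative F3 (g0 t, g1 t, g2 t, g3 t)) (at t within {0..})"
      using gd unfolding F3_def by simp
    show "\<And>t. 0 \<le> t \<Longrightarrow> (k0 has_real_derivative F0 (k0 t, k1 t, k2 t, k3 t)) (at t within {0..})"
      using kd unfolding F0_def by simp
    show "\<And>t. 0 \<le> t \<Longrightarrow> (k1 has_real_derivative F1 (k0 t, k1 t, k2 t, k3 t)) (at t within {0..})"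
      using kd unfolding F1_def by simp
    show "\<And>t. 0 \<le> t \<Longrightarrow> (k2 has_real_derivative F2 (k0 t, k1 t, k2 t, k3 t)) (at t within {0..})"
      using kd unfolding F2_def by simp
    show "\<And>t. 0 \<le> t \<Longrightarrow> (k3 has_real_derivative F3 (k0 t, k1 t, k2 t, k3 t)) (at t within {0..})"
      using kd unfolding F3_def by simp
    show "g0 0 = k0 0" "g1 0 = k1 0" "g2 0 = k2 0" "g3 0 = k3 0" using gd kd by simp_all
    show "0 \<le> t" by (rule t)
  qed
qed

theorem theorem5p20:
  fixes h0 h1 h2 h3 :: real
  assumes "h0 > 0" "h1 > 0" "h2 > 0" "h3 > 0"
    and "h1 \<le> h2" "h2 \<le> h3"
    and "in_D_S h0 h1 h2 h3"
  shows "(\<exists>g0 g1 g2 g3. S3_solution h0 h1 h2 h3 g0 g1 g2 g3) \<and>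
         (\<forall>g0 g1 g2 g3. S3_solution h0 h1 h2 h3 g0 g1 g2 g3 \<longrightarrow>
            (g0 \<longlongrightarrow> 0) at_top \<and>
            filterlim g1 at_top at_top \<and> filterlim g2 at_top at_top \<and> filterlim g3 at_top at_top \<and>
            ((\<lambda>t. g2 t / g1 t) \<longlongrightarrow> 4) at_top \<and>
            ((\<lambda>t. g2 t / g3 t) \<longlongrightarrow> 1) at_top)"
proof -
  obtain b c where bc: "P_solution (h0*h1*h2*h3) (h0 powr (1/3) * h2) (h0 powr (1/3) * h3) b c"
    "(b \<longlongrightarrow> (4*(h0*h1*h2*h3)) powr (1/3)) at_top" "(c \<longlongrightarrow> (4*(h0*h1*h2*h3)) powr (1/3)) at_top"
    using assms(7) unfolding in_D_S_def Let_def by blast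
  interpret cons h0 h1 h2 h3 b c
    by unfold_locales (use assms bc in auto)
  have ex: "\<exists>g0 g1 g2 g3. S3_solution h0 h1 h2 h3 g0 g1 g2 g3" using G_sol by blast
  have all: "(g0 \<longlongrightarrow> 0) at_top \<and>
            filterlim g1 at_top at_top \<and> filterlim g2 at_top at_top \<and> filterlim g3 at_top at_top \<and>
            ((\<lambda>t. g2 t / g1 t) \<longlongrightarrow> 4) at_top \<and>
            ((\<lambda>t. g2 t / g3 t) \<longlongrightarrow> 1) at_top"
    if sol: "S3_solution h0 h1 h2 h3 g0 g1 g2 g3" for g0 g1 g2 g3
  proof -
    have eq: "g0 t = G0 t \<and> g1 t = G1 t \<and> g2 t = G2 t \<and> g3 t = G3 t" if "t \<ge> 0" for t
      using S3_uniq[OF sol G_sol that] .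
    have e0: "eventually (\<lambda>t. G0 t = g0 t) at_top"
      using eventually_ge_at_top[of 0] by eventually_elim (use eq in simp)
    have e1: "eventually (\<lambda>t. G1 t = g1 t) at_top"
      using eventually_ge_at_top[of 0] by eventually_elim (use eq in simp)
    have e2: "eventually (\<lambda>t. G2 t = g2 t) at_top"
      using eventually_ge_at_top[of 0] by eventually_elim (use eq in simp)
    have e3: "eventually (\<lambda>t. G3 t = g3 t) at_top"
      using eventually_ge_at_top[of 0] by eventually_elim (use eq in simp)
    have e21: "eventually (\<lambda>t. G2 t / G1 t = g2 t / g1 t) at_top"
      using eventually_ge_at_top[of 0] by eventually_elim (use eq in simp)
    have e23: "eventually (\<lambda>t. G2 t / G3 t = g2 t / g3 t) at_top"
      using eventually_ge_at_top[of 0] by eventually_elim (use eq in simp)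
    show ?thesis
    proof (intro conjI)
      show "(g0 \<longlongrightarrow> 0) at_top" using tendsto_cong[OF e0, THEN iffD1, OF G_lims(1)] .
      show "filterlim g1 at_top at_top" using filterlim_cong[OF refl refl e1, THEN iffD1, OF G_lims(2)] .
      show "filterlim g2 at_top at_top" using filterlim_cong[OF refl refl e2, THEN iffD1, OF G_lims(3)] .
      show "filterlim g3 at_top at_top" using filterlim_cong[OF refl refl e3, THEN iffD1, OF G_lims(4)] .
      show "((\<lambda>t. g2 t / g1 t) \<longlongrightarrow> 4) at_top" using tendsto_cong[OF e21, THEN iffD1, OF G_lims(5)] .
      show "((\<lambda>t. g2 t / g3 t) \<longlongrightarrow> 1) at_top" using tendsto_cong[OF e23, THEN iffD1, OF G_lims(6)] .
    qed
  qed
  show ?thesis using ex all by blast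
qed


end
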